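(* Let $\mathcal{N}=(Q,\Sigma,\Delta,q_0,F)$ be a history-deterministic one-counter net. A strategy $\sigma$ of Eve in the letter game on $\mathcal{N}$ is winning for Eve if and only if every step $(p,k)\xrightarrow{a,d}(p',k')$ that $\sigma$ takes is a good transition.
   Context: A one-counter net (OCN) is $\mathcal{N}=(Q,\Sigma,\Delta,q_0,F)$ with $Q$ finite, $\Sigma$ finite, $q_0\in Q$, $F\subseteq Q$, $\Delta\subseteq Q\times\Sigma\times\{-1,0,1\}\times Q$; configurations $(q,n)\in Q\times\mathbb{N}$, step $(q,n)\xrightarrow{a,d}(p,n+d)$ if $(q,a,d,p)\in\Delta$ and $n+d\ge0$; runs start at $(q_0,0)$ and are accepting if the last state is in $F$; $\mathcal{L}(\mathcal{N})$ is the set of words with an accepting run. Letter game: positions $(c,w)$, start $((q_0,0),\varepsilon)$; each round Adam picks $a\in\Sigma$, Eve picks a step $c\xrightarrow{a,d}c'$; if Eve has none and $wa$ is a prefix of a word of $\mathcal{L}(\mathcal{N})$ she loses; if $wa\in\mathcal{L}(\mathcal{N})$ but the state of $c'$ is not in $F$, Adam wins; otherwise continue from $(c',wa)$; Eve wins infinite plays. $\mathcal{N}$ is history-deterministic if Eve wins the letter game. The game $G_1$ on $\mathcal{N}$ from a position $(c^E,c^A)$ (Eve's token, Adam's token): each round Adam picks $a\in\Sigma$; Eve picks a step $c^E\xrightarrow{a,d}c^E_{+}$; Adam picks a step $c^A\xrightarrow{a,d'}c^A_{+}$. If Adam cannot move his token, he loses. If Eve cannot move while Adam can move and extend his run to an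 accepting run, Eve loses. If both move and the state of $c^A_+$ is in $F$ but that of $c^E_+$ is not, Eve loses. Otherwise continue; Eve wins infinite plays. A transition $\delta=(p,a,d,p')\in\Delta$ is good at $(p,k)$ (equivalently, the step $(p,k)\xrightarrow{a,d}(p',k+d)$ is good) if Eve wins $G_1$ from $((p,k),(p,k))$ and choosing this step is a winning move for Eve there when Adam chooses the letter $a$. *)

theory Defs
  imports Main
begin

text \<open>States and letters are finite types ('q::finite, 'a::finite),
  so Q = UNIV and Sigma = UNIV.\<close>

type_synonym ('q,'a) trans = "'q \<times> 'a \<times> int \<times> 'q"
type_synonym 'q conf = "'q \<times> nat"

definition ocn :: "('q::finite,'a::finite) trans set \<Rightarrow> bool" where
  "ocn Delta \<longleftrightarrow> (\<forall>(p,a,d,p')\<in>Delta. d \<in> {-1,0,1})"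

definition applicable :: "('q,'a) trans set \<Rightarrow> 'q conf \<Rightarrow> 'a \<Rightarrow> ('q,'a) trans \<Rightarrow> bool" where
  "applicable Delta c a t \<longleftrightarrow> (case t of (p,b,d,p') \<Rightarrow>
      t \<in> Delta \<and> b = a \<and> p = fst c \<and> int (snd c) + d \<ge> 0)"

definition target :: "'q conf \<Rightarrow> ('q,'a) trans \<Rightarrow> 'q conf" where
  "target c t = (case t of (p,b,d,p') \<Rightarrow> (p', nat (int (snd c) + d)))"

definition step :: "('q,'a) trans set \<Rightarrow> 'q conf \<Rightarrow> 'a \<Rightarrow> 'q conf \<Rightarrow> bool" where
  "step Delta c a c' \<longleftrightarrow> (\<exists>t. applicable Delta c a t \<and> c' = target c t)"

inductive reach :: "('q,'a) trans set \<Rightarrow> 'q conf \<Rightarrow> 'a list \<Rightarrow> 'q conf \<Rightarrow> bool"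
  for Delta where
  reach_Nil: "reach Delta c [] c"
| reach_Cons: "step Delta c a c' \<Longrightarrow> reach Delta c' w c'' \<Longrightarrow> reach Delta c (a # w) c''"

definition lang :: "('q,'a) trans set \<Rightarrow> 'q \<Rightarrow> 'q set \<Rightarrow> 'a list set" where
  "lang Delta q0 F = {w. \<exists>c. reach Delta (q0, 0) w c \<and> fst c \<in> F}"

definition can_accept :: "('q,'a) trans set \<Rightarrow> 'q set \<Rightarrow> 'q conf \<Rightarrow> bool" where
  "can_accept Delta F c \<longleftrightarrow> (\<exists>w c'. reach Delta c w c' \<and> fst c' \<in> F)"

text \<open>An Eve strategy in the letter game maps the word w read so far and Adam's
  new letter a to the transition she takes. lpos gives Eve's configuration after
  the word (None once the play has stopped because Eve had no move).\<close>

type_synonym ('q,'a) lstrat = "'a list \<Rightarrow> 'a \<Rightarrow> ('q,'a) trans"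

fun lpos_rev :: "('q,'a) trans set \<Rightarrow> 'q \<Rightarrow> ('q,'a) lstrat \<Rightarrow> 'a list \<Rightarrow> 'q conf option" where
  "lpos_rev Delta q0 \<sigma> [] = Some (q0, 0)"
| "lpos_rev Delta q0 \<sigma> (a # rw) =
     (case lpos_rev Delta q0 \<sigma> rw of
        None \<Rightarrow> None
      | Some c \<Rightarrow> (if applicable Delta c a (\<sigma> (rev rw) a)
                   then Some (target c (\<sigma> (rev rw) a)) else None))"

definition letter_pos :: "('q,'a) trans set \<Rightarrow> 'q \<Rightarrow> ('q,'a) lstrat \<Rightarrow> 'a list \<Rightarrow> 'q conf option" where
  "letter_pos Delta q0 \<sigma> w = lpos_rev Delta q0 \<sigma> (rev w)"

definition letter_strategy :: "('q,'a) trans set \<Rightarrow> 'q \<Rightarrow> ('q,'a) lstrat \<Rightarrow> bool" where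
  "letter_strategy Delta q0 \<sigma> \<longleftrightarrow>
     (\<forall>w a c. letter_pos Delta q0 \<sigma> w = Some c \<longrightarrow> (\<exists>c'. step Delta c a c') \<longrightarrow>
        applicable Delta c a (\<sigma> w a))"

definition letter_winning :: "('q,'a) trans set \<Rightarrow> 'q \<Rightarrow> 'q set \<Rightarrow> ('q,'a) lstrat \<Rightarrow> bool" where
  "letter_winning Delta q0 F \<sigma> \<longleftrightarrow>
     (\<forall>w a c. letter_pos Delta q0 \<sigma> w = Some c \<longrightarrow>
        (if \<exists>c'. step Delta c a c'
         then applicable Delta c a (\<sigma> w a) \<and>
              (w @ [a] \<in> lang Delta q0 F \<longrightarrow> fst (target c (\<sigma> w a)) \<in> F)
         else \<not> (\<exists>v. (w @ [a]) @ v \<in> lang Delta q0 F)))"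

definition history_deterministic :: "('q,'a) trans set \<Rightarrow> 'q \<Rightarrow> 'q set \<Rightarrow> bool" where
  "history_deterministic Delta q0 F \<longleftrightarrow> (\<exists>\<sigma>. letter_winning Delta q0 F \<sigma>)"

text \<open>An Eve strategy in G1 maps the history of completed rounds (Adam's letter and
  Adam's chosen transition for his token) and Adam's new letter to her transition.\<close>

type_synonym ('q,'a) gstrat = "('a \<times> ('q,'a) trans) list \<Rightarrow> 'a \<Rightarrow> ('q,'a) trans"

fun gpos_rev :: "('q,'a) trans set \<Rightarrow> ('q,'a) gstrat \<Rightarrow> 'q conf \<times> 'q conf
    \<Rightarrow> ('a \<times> ('q,'a) trans) list \<Rightarrow> ('q conf \<times> 'q conf) option" where
  "gpos_rev Delta \<tau> s [] = Some s"
| "gpos_rev Delta \<tau> s ((a, t) # rh) =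
     (case gpos_rev Delta \<tau> s rh of
        None \<Rightarrow> None
      | Some (e, x) \<Rightarrow>
          (if applicable Delta e a (\<tau> (rev rh) a) \<and> applicable Delta x a t
           then Some (target e (\<tau> (rev rh) a), target x t) else None))"

definition g1_pos :: "('q,'a) trans set \<Rightarrow> ('q,'a) gstrat \<Rightarrow> 'q conf \<times> 'q conf
    \<Rightarrow> ('a \<times> ('q,'a) trans) list \<Rightarrow> ('q conf \<times> 'q conf) option" where
  "g1_pos Delta \<tau> s h = gpos_rev Delta \<tau> s (rev h)"

text \<open>tau is winning for Eve in G1 from s = (Eve's token, Adam's token).\<close>
definition g1_winning :: "('q,'a) trans set \<Rightarrow> 'q set \<Rightarrow> ('q,'a) gstrat \<Rightarrow> 'q conf \<times> 'q conf \<Rightarrow> bool" where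
  "g1_winning Delta F \<tau> s \<longleftrightarrow>
     (\<forall>h a e x. g1_pos Delta \<tau> s h = Some (e, x) \<longrightarrow>
        (if \<exists>e'. step Delta e a e'
         then applicable Delta e a (\<tau> h a) \<and>
              (\<forall>x'. step Delta x a x' \<longrightarrow> fst x' \<in> F \<longrightarrow> fst (target e (\<tau> h a)) \<in> F)
         else (\<forall>x'. step Delta x a x' \<longrightarrow> \<not> can_accept Delta F x')))"

text \<open>Transition t (on letter a) is good at configuration c: Eve wins G1 from (c,c)
  and taking t is a winning move there when Adam picks a, i.e. some winning
  strategy of Eve from (c,c) answers the first letter a with t.\<close>
definition good :: "('q,'a) trans set \<Rightarrow> 'q set \<Rightarrow> 'q conf \<Rightarrow> ('q,'a) trans \<Rightarrow> bool" where
  "good Delta F c t \<longleftrightarrow>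
     (case t of (p,a,d,p') \<Rightarrow> applicable Delta c a t \<and>
        (\<exists>\<tau>. g1_winning Delta F \<tau> (c, c) \<and> \<tau> [] a = t))"

end

theory Submission
  imports Defs
begin

lemma reach_append:
  "reach D c (u @ v) c'' \<longleftrightarrow> (\<exists>c'. reach D c u c' \<and> reach D c' v c'')"
proof (induction u arbitrary: c)
  case Nil
  have "reach D c [] c" by (rule reach.intros)
  moreover have "reach D c [] c' \<Longrightarrow> c' = c" for c' by (auto elim: reach.cases)
  ultimately show ?case by (metis append_Nil)
next
  case (Cons a u)
  show ?case
  proof
    assume "reach D c ((a # u) @ v) c''"
    then obtain c1 where "step D c a c1" "reach D c1 (u @ v) c''"
      by (auto elim: reach.cases)
    then show "\<exists>c'. reach D c (a # u) c' \<and> reach D c' v c''"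
      using Cons by (auto intro: reach.intros)
  next
    assume "\<exists>c'. reach D c (a # u) c' \<and> reach D c' v c''"
    then obtain c' c1 where "step D c a c1" "reach D c1 u c'" "reach D c' v c''"
      by (auto elim: reach.cases)
    then show "reach D c ((a # u) @ v) c''"
      using Cons.IH by (metis append_Cons reach.reach_Cons)
  qed
qed

lemma reach_snoc:
  "reach D c (u @ [a]) c'' \<longleftrightarrow> (\<exists>c'. reach D c u c' \<and> step D c' a c'')"
  unfolding reach_append
  by (auto intro: reach.intros elim: reach.cases)

lemma letter_pos_snoc:
  "letter_pos D q0 \<sigma> (w @ [a]) = (case letter_pos D q0 \<sigma> w of None \<Rightarrow> None
     | Some c \<Rightarrow> (if applicable D c a (\<sigma> w a) then Some (target c (\<sigma> w a)) else None))"
  by (simp add: letter_pos_def split: option.split)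

lemma letter_pos_Nil: "letter_pos D q0 \<sigma> [] = Some (q0, 0)"
  by (simp add: letter_pos_def)

lemma step_intro: "applicable D c a t \<Longrightarrow> step D c a (target c t)"
  unfolding step_def by blast

lemma letter_pos_reach:
  "letter_pos D q0 \<sigma> w = Some c \<Longrightarrow> reach D (q0, 0) w c"
proof (induction w arbitrary: c rule: rev_induct)
  case Nil
  then show ?case by (simp add: letter_pos_Nil reach.intros)
next
  case (snoc a w)
  then obtain c0 where c0: "letter_pos D q0 \<sigma> w = Some c0"
    and ap: "applicable D c0 a (\<sigma> w a)" and c: "c = target c0 (\<sigma> w a)"
    by (auto simp: letter_pos_snoc split: option.splits if_splits)
  show ?case using snoc.IH[OF c0] step_intro[OF ap] c reach_snoc
    by metis
qed

lemma g1_pos_snoc: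
  "g1_pos D \<tau> s (h @ [(a,t)]) = (case g1_pos D \<tau> s h of None \<Rightarrow> None
     | Some (e, x) \<Rightarrow> (if applicable D e a (\<tau> h a) \<and> applicable D x a t
           then Some (target e (\<tau> h a), target x t) else None))"
  by (simp add: g1_pos_def split: option.split)

lemma g1_pos_Nil: "g1_pos D \<tau> s [] = Some s"
  by (simp add: g1_pos_def)

coinductive R :: "('q,'a) trans set \<Rightarrow> 'q set \<Rightarrow> 'q conf \<Rightarrow> 'q conf \<Rightarrow> bool"
  for D F where
  "(\<forall>a. (\<exists>e'. step D e a e' \<and>
          (\<forall>x'. step D x a x' \<longrightarrow> (fst x' \<in> F \<longrightarrow> fst e' \<in> F) \<and> R D F e' x')) \<or>
        ((\<forall>e'. \<not> step D e a e') \<and> (\<forall>x'. step D x a x' \<longrightarrow> \<not> can_accept D F x')))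
   \<Longrightarrow> R D F e x"


lemma R_step:
  assumes "R D F e x" "step D e a e1"
  shows "\<exists>e'. step D e a e' \<and>
          (\<forall>x'. step D x a x' \<longrightarrow> (fst x' \<in> F \<longrightarrow> fst e' \<in> F) \<and> R D F e' x')"
  using assms by (cases rule: R.cases) blast

lemma R_nostep:
  assumes "R D F e x" "\<forall>e'. \<not> step D e a e'" "step D x a x'"
  shows "\<not> can_accept D F x'"
  using assms by (cases rule: R.cases) blast

lemma R_accept_aux:
  "reach D r v r'' \<Longrightarrow> R D F q r \<Longrightarrow> fst r'' \<in> F \<Longrightarrow> (fst r \<in> F \<longrightarrow> fst q \<in> F)
   \<Longrightarrow> can_accept D F q"
proof (induction arbitrary: q rule: reach.induct)
  case (reach_Nil c)
  then show ?case unfolding can_accept_def by (blast intro: reach.intros)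
next
  case (reach_Cons c a c' w c'')
  show ?case
  proof (cases "\<exists>e1. step D q a e1")
    case True
    then obtain e1 where "step D q a e1" by blast
    from R_step[OF reach_Cons.prems(1) this] obtain q1 where
      q1: "step D q a q1" "(fst c' \<in> F \<longrightarrow> fst q1 \<in> F) \<and> R D F q1 c'"
      using reach_Cons.hyps(1) by blast
    then have "can_accept D F q1" using reach_Cons.IH reach_Cons.prems by blast
    then show ?thesis using q1(1) unfolding can_accept_def by (blast intro: reach.intros)
  next
    case False
    then have "\<not> can_accept D F c'"
      using R_nostep[OF reach_Cons.prems(1) _ reach_Cons.hyps(1)] by blast
    then show ?thesis using reach_Cons.hyps(2) reach_Cons.prems(2) unfolding can_accept_def by blast
  qed
qed

lemma R_accept:
  "R D F q r \<Longrightarrow> (fst r \<in> F \<longrightarrow> fst q \<in> F) \<Longrightarrow> can_accept D F r \<Longrightarrow> can_accept D F q"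
  unfolding can_accept_def[of D F r] using R_accept_aux by blast

lemma no_accept_step:
  "\<not> can_accept D F r \<Longrightarrow> step D r a r' \<Longrightarrow> \<not> can_accept D F r' \<and> fst r' \<notin> F"
  unfolding can_accept_def by (blast intro: reach.intros)

lemma no_accept_self: "\<not> can_accept D F r \<Longrightarrow> fst r \<notin> F"
  unfolding can_accept_def by (blast intro: reach.intros)

lemma R_trans:
  assumes "R D F p q" "R D F q r"
  shows "R D F p r"
proof -
  have "(\<exists>q. R D F p q \<and> R D F q r) \<or> \<not> can_accept D F r" using assms by blast
  then show ?thesis
  proof (coinduction arbitrary: p r rule: R.coinduct)
    case (R p r)
    have "\<forall>a. (\<exists>e'. step D p a e' \<and>
          (\<forall>x'. step D r a x' \<longrightarrow> (fst x' \<in> F \<longrightarrow> fst e' \<in> F) \<and>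
            (((\<exists>q. R D F e' q \<and> R D F q x') \<or> \<not> can_accept D F x') \<or> R D F e' x'))) \<or>
        ((\<forall>e'. \<not> step D p a e') \<and> (\<forall>x'. step D r a x' \<longrightarrow> \<not> can_accept D F x'))"
    proof (intro allI)
      fix a
      show "(\<exists>e'. step D p a e' \<and>
          (\<forall>x'. step D r a x' \<longrightarrow> (fst x' \<in> F \<longrightarrow> fst e' \<in> F) \<and>
            (((\<exists>q. R D F e' q \<and> R D F q x') \<or> \<not> can_accept D F x') \<or> R D F e' x'))) \<or>
        ((\<forall>e'. \<not> step D p a e') \<and> (\<forall>x'. step D r a x' \<longrightarrow> \<not> can_accept D F x'))"
      proof (cases "\<not> can_accept D F r")
        case True
        then show ?thesis using no_accept_step[OF True] by blast
      next
        case False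
        with R obtain q where pq: "R D F p q" and qr: "R D F q r" by blast
        show ?thesis
        proof (cases "\<exists>e1. step D p a e1")
          case True
          then obtain p' where p': "step D p a p'"
            "\<forall>x'. step D q a x' \<longrightarrow> (fst x' \<in> F \<longrightarrow> fst p' \<in> F) \<and> R D F p' x'"
            using R_step[OF pq] by blast
          show ?thesis
          proof (cases "\<exists>e1. step D q a e1")
            case True
            then obtain q' where q': "step D q a q'"
              "\<forall>x'. step D r a x' \<longrightarrow> (fst x' \<in> F \<longrightarrow> fst q' \<in> F) \<and> R D F q' x'"
              using R_step[OF qr] by blast
            then show ?thesis using p' by blast
          next
            case False
            then have "\<forall>x'. step D r a x' \<longrightarrow> \<not> can_accept D F x'"
              using R_nostep[OF qr] by blast
            then show ?thesis using p'(1) no_accept_self by blast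
          qed
        next
          case nP: False
          have "\<forall>x'. step D r a x' \<longrightarrow> \<not> can_accept D F x'"
          proof (cases "\<exists>e1. step D q a e1")
            case True
            then obtain q' where q': "step D q a q'"
              "\<forall>x'. step D r a x' \<longrightarrow> (fst x' \<in> F \<longrightarrow> fst q' \<in> F) \<and> R D F q' x'"
              using R_step[OF qr] by blast
            have "\<not> can_accept D F q'" using R_nostep[OF pq] nP q'(1) by blast
            then show ?thesis using q'(2) R_accept by blast
          next
            case False
            then show ?thesis using R_nostep[OF qr] by blast
          qed
          then show ?thesis using nP by blast
        qed
      qed
    qed
    then show ?case by simp
  qed
qed


lemma step_elim: "step D x a x' \<Longrightarrow> \<exists>t. applicable D x a t \<and> x' = target x t"
  unfolding step_def by blast

lemma g1_to_R:
  assumes win: "g1_winning D F \<tau> s" and pos: "g1_pos D \<tau> s h = Some (e, x)"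
  shows "R D F e x"
proof -
  have "\<exists>h. g1_pos D \<tau> s h = Some (e, x)" using pos by blast
  then show ?thesis
  proof (coinduction arbitrary: e x rule: R.coinduct)
    case (R e x)
    then obtain h where hp: "g1_pos D \<tau> s h = Some (e, x)" by blast
    have "\<forall>a. (\<exists>e'. step D e a e' \<and>
          (\<forall>x'. step D x a x' \<longrightarrow> (fst x' \<in> F \<longrightarrow> fst e' \<in> F) \<and>
            ((\<exists>h. g1_pos D \<tau> s h = Some (e', x')) \<or> R D F e' x'))) \<or>
        ((\<forall>e'. \<not> step D e a e') \<and> (\<forall>x'. step D x a x' \<longrightarrow> \<not> can_accept D F x'))"
    proof (intro allI)
      fix a
      note W = win[unfolded g1_winning_def, rule_format, OF hp, of a]
      show "(\<exists>e'. step D e a e' \<and>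
          (\<forall>x'. step D x a x' \<longrightarrow> (fst x' \<in> F \<longrightarrow> fst e' \<in> F) \<and>
            ((\<exists>h. g1_pos D \<tau> s h = Some (e', x')) \<or> R D F e' x'))) \<or>
        ((\<forall>e'. \<not> step D e a e') \<and> (\<forall>x'. step D x a x' \<longrightarrow> \<not> can_accept D F x'))"
      proof (cases "\<exists>e'. step D e a e'")
        case True
        with W have ap: "applicable D e a (\<tau> h a)" and
          fF: "\<forall>x'. step D x a x' \<longrightarrow> fst x' \<in> F \<longrightarrow> fst (target e (\<tau> h a)) \<in> F" by auto
        have "\<forall>x'. step D x a x' \<longrightarrow> (\<exists>h'. g1_pos D \<tau> s h' = Some (target e (\<tau> h a), x'))"
        proof (intro allI impI)
          fix x' assume sx: "step D x a x'"
          obtain t where t: "applicable D x a t" "x' = target x t" using step_elim[OF sx] by blast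
          have "g1_pos D \<tau> s (h @ [(a,t)]) = Some (target e (\<tau> h a), x')"
            using hp ap t by (simp add: g1_pos_snoc)
          then show "\<exists>h'. g1_pos D \<tau> s h' = Some (target e (\<tau> h a), x')" by blast
        qed
        then show ?thesis using step_intro[OF ap] fF by blast
      next
        case False
        with W show ?thesis by auto
      qed
    qed
    then show ?case by simp
  qed
qed

lemma good_to_R:
  assumes g: "good D F c t" and ap: "applicable D c a t" and st: "step D c a e2"
  shows "(fst e2 \<in> F \<longrightarrow> fst (target c t) \<in> F) \<and> R D F (target c t) e2"
proof -
  obtain p b d p' where tt: "t = (p,b,d,p')" by (cases t) auto
  with ap have "b = a" by (simp add: applicable_def)
  with g tt obtain \<tau> where win: "g1_winning D F \<tau> (c, c)" and ta: "\<tau> [] a = t"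
    by (auto simp: good_def)
  obtain t2 where t2: "applicable D c a t2" "e2 = target c t2" using step_elim[OF st] by blast
  have ex: "\<exists>e'. step D c a e'" using st by blast
  have W: "\<forall>x'. step D c a x' \<longrightarrow> fst x' \<in> F \<longrightarrow> fst (target c (\<tau> [] a)) \<in> F"
    using win[unfolded g1_winning_def, rule_format, OF g1_pos_Nil, of a] unfolding if_P[OF ex] by blast
  have "g1_pos D \<tau> (c,c) ([] @ [(a,t2)]) = Some (target c t, e2)"
    using ap ta t2 by (simp add: g1_pos_def)
  then have "R D F (target c t) e2" using g1_to_R[OF win] by blast
  then show ?thesis using W st ta by blast
qed

lemma HD_to_R:
  assumes win: "letter_winning D q0 F \<sigma>" and lp: "letter_pos D q0 \<sigma> w = Some c"
    and rx: "reach D (q0, 0) w x"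
  shows "R D F c x"
proof -
  have "\<exists>w. letter_pos D q0 \<sigma> w = Some c \<and> reach D (q0, 0) w x" using lp rx by blast
  then show ?thesis
  proof (coinduction arbitrary: c x rule: R.coinduct)
    case (R c x)
    then obtain w where hp: "letter_pos D q0 \<sigma> w = Some c" and rx: "reach D (q0, 0) w x" by blast
    have "\<forall>a. (\<exists>e'. step D c a e' \<and>
          (\<forall>x'. step D x a x' \<longrightarrow> (fst x' \<in> F \<longrightarrow> fst e' \<in> F) \<and>
            ((\<exists>w. letter_pos D q0 \<sigma> w = Some e' \<and> reach D (q0, 0) w x') \<or> R D F e' x'))) \<or>
        ((\<forall>e'. \<not> step D c a e') \<and> (\<forall>x'. step D x a x' \<longrightarrow> \<not> can_accept D F x'))"
    proof (intro allI)
      fix a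
      note W = win[unfolded letter_winning_def, rule_format, OF hp, of a]
      show "(\<exists>e'. step D c a e' \<and>
          (\<forall>x'. step D x a x' \<longrightarrow> (fst x' \<in> F \<longrightarrow> fst e' \<in> F) \<and>
            ((\<exists>w. letter_pos D q0 \<sigma> w = Some e' \<and> reach D (q0, 0) w x') \<or> R D F e' x'))) \<or>
        ((\<forall>e'. \<not> step D c a e') \<and> (\<forall>x'. step D x a x' \<longrightarrow> \<not> can_accept D F x'))"
      proof (cases "\<exists>e'. step D c a e'")
        case True
        with W have ap: "applicable D c a (\<sigma> w a)" and
          fF: "w @ [a] \<in> lang D q0 F \<longrightarrow> fst (target c (\<sigma> w a)) \<in> F" by auto
        have lp2: "letter_pos D q0 \<sigma> (w @ [a]) = Some (target c (\<sigma> w a))"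
          using hp ap by (simp add: letter_pos_snoc)
        have "\<forall>x'. step D x a x' \<longrightarrow> (fst x' \<in> F \<longrightarrow> fst (target c (\<sigma> w a)) \<in> F) \<and>
             reach D (q0, 0) (w @ [a]) x'"
        proof (intro allI impI)
          fix x' assume sx: "step D x a x'"
          then have r2: "reach D (q0, 0) (w @ [a]) x'" using rx reach_snoc by metis
          then show "(fst x' \<in> F \<longrightarrow> fst (target c (\<sigma> w a)) \<in> F) \<and> reach D (q0, 0) (w @ [a]) x'"
            using fF unfolding lang_def by blast
        qed
        then show ?thesis using step_intro[OF ap] lp2 by blast
      next
        case False
        with W have nl: "\<not> (\<exists>v. (w @ [a]) @ v \<in> lang D q0 F)" by auto
        have "\<forall>x'. step D x a x' \<longrightarrow> \<not> can_accept D F x'"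
        proof (intro allI impI notI)
          fix x' assume sx: "step D x a x'" and ca: "can_accept D F x'"
          then obtain v y where "reach D x' v y" "fst y \<in> F" unfolding can_accept_def by blast
          moreover have "reach D (q0, 0) (w @ [a]) x'" using sx rx reach_snoc by metis
          ultimately have "(w @ [a]) @ v \<in> lang D q0 F"
            unfolding lang_def using reach_append by blast
          with nl show False by blast
        qed
        with False show ?thesis by blast
      qed
    qed
    then show ?case by simp
  qed
qed


lemma reach_Nil_iff: "reach D c [] x \<longleftrightarrow> x = c"
  by (auto intro: reach.intros elim: reach.cases)

lemma good_step:
  assumes gd: "\<forall>w a c c'. letter_pos D q0 \<sigma> w = Some c \<longrightarrow>
        letter_pos D q0 \<sigma> (w @ [a]) = Some c' \<longrightarrow> good D F c (\<sigma> w a)"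
    and lp: "letter_pos D q0 \<sigma> w = Some c" and ap: "applicable D c a (\<sigma> w a)"
    and Rcx: "R D F c x" and sx: "step D x a x'"
  shows "(fst x' \<in> F \<longrightarrow> fst (target c (\<sigma> w a)) \<in> F) \<and> R D F (target c (\<sigma> w a)) x'"
proof -
  have lp2: "letter_pos D q0 \<sigma> (w @ [a]) = Some (target c (\<sigma> w a))"
    using lp ap by (simp add: letter_pos_snoc)
  have g: "good D F c (\<sigma> w a)" using gd lp lp2 by blast
  obtain e2 where e2: "step D c a e2"
    "\<forall>x'. step D x a x' \<longrightarrow> (fst x' \<in> F \<longrightarrow> fst e2 \<in> F) \<and> R D F e2 x'"
    using R_step[OF Rcx step_intro[OF ap]] by blast
  have "(fst e2 \<in> F \<longrightarrow> fst (target c (\<sigma> w a)) \<in> F) \<and> R D F (target c (\<sigma> w a)) e2"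
    using good_to_R[OF g ap e2(1)] .
  then show ?thesis using e2(2) sx R_trans by blast
qed

lemma inv:
  assumes hd: "history_deterministic D q0 F"
    and gd: "\<forall>w a c c'. letter_pos D q0 \<sigma> w = Some c \<longrightarrow>
        letter_pos D q0 \<sigma> (w @ [a]) = Some c' \<longrightarrow> good D F c (\<sigma> w a)"
  shows "letter_pos D q0 \<sigma> w = Some c \<Longrightarrow> reach D (q0, 0) w x \<Longrightarrow> R D F c x"
proof (induction w arbitrary: c x rule: rev_induct)
  case Nil
  obtain \<sigma>' where w': "letter_winning D q0 F \<sigma>'" using hd unfolding history_deterministic_def by blast
  have "c = (q0, 0)" "x = (q0, 0)" using Nil by (auto simp: letter_pos_Nil reach_Nil_iff)
  then show ?case using HD_to_R[OF w' letter_pos_Nil, of "(q0,0)"] by (simp add: reach.intros)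
next
  case (snoc a w)
  then obtain c0 where c0: "letter_pos D q0 \<sigma> w = Some c0"
    and ap: "applicable D c0 a (\<sigma> w a)" and c: "c = target c0 (\<sigma> w a)"
    by (auto simp: letter_pos_snoc split: option.splits if_splits)
  obtain x0 where x0: "reach D (q0, 0) w x0" "step D x0 a x" using snoc.prems(2) reach_snoc by metis
  have "R D F c0 x0" using snoc.IH[OF c0 x0(1)] .
  then show ?case using good_step[OF gd c0 ap _ x0(2)] c by blast
qed

lemma dir2:
  assumes hd: "history_deterministic D q0 F"
    and ls: "letter_strategy D q0 \<sigma>"
    and gd: "\<forall>w a c c'. letter_pos D q0 \<sigma> w = Some c \<longrightarrow>
        letter_pos D q0 \<sigma> (w @ [a]) = Some c' \<longrightarrow> good D F c (\<sigma> w a)"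
  shows "letter_winning D q0 F \<sigma>"
  unfolding letter_winning_def
proof (intro allI impI)
  fix w a c assume lp: "letter_pos D q0 \<sigma> w = Some c"
  show "if \<exists>c'. step D c a c'
         then applicable D c a (\<sigma> w a) \<and>
              (w @ [a] \<in> lang D q0 F \<longrightarrow> fst (target c (\<sigma> w a)) \<in> F)
         else \<not> (\<exists>v. (w @ [a]) @ v \<in> lang D q0 F)"
  proof (cases "\<exists>c'. step D c a c'")
    case True
    have ap: "applicable D c a (\<sigma> w a)" using ls True lp unfolding letter_strategy_def by blast
    have "fst (target c (\<sigma> w a)) \<in> F" if L: "w @ [a] \<in> lang D q0 F"
    proof -
      obtain y where y: "reach D (q0,0) (w @ [a]) y" "fst y \<in> F"
        using L unfolding lang_def by blast
      obtain x where x: "reach D (q0, 0) w x" "step D x a y" using y(1) reach_snoc by metis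
      have "R D F c x" using inv[OF hd gd lp x(1)] .
      then show ?thesis using good_step[OF gd lp ap _ x(2)] y(2) by blast
    qed
    then show ?thesis using True ap by simp
  next
    case False
    have "\<not> (\<exists>v. (w @ [a]) @ v \<in> lang D q0 F)"
    proof
      assume "\<exists>v. (w @ [a]) @ v \<in> lang D q0 F"
      then obtain v y where y: "reach D (q0,0) ((w @ [a]) @ v) y" "fst y \<in> F"
        unfolding lang_def by blast
      obtain x1 where x1: "reach D (q0,0) (w @ [a]) x1" "reach D x1 v y" using y(1) reach_append by metis
      obtain x where x: "reach D (q0, 0) w x" "step D x a x1" using x1(1) reach_snoc by metis
      have "R D F c x" using inv[OF hd gd lp x(1)] .
      then have "\<not> can_accept D F x1" using R_nostep[of D F c x a x1] False x(2) by blast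
      then show False using x1(2) y(2) unfolding can_accept_def by blast
    qed
    then show ?thesis using False by simp
  qed
qed



lemma g1_sim:
  fixes D :: "('q,'a) trans set" and \<sigma> :: "'a list \<Rightarrow> 'a \<Rightarrow> ('q,'a) trans"
    and h :: "('a \<times> ('q,'a) trans) list"
  assumes lp: "letter_pos D q0 \<sigma> w = Some c"
  shows "g1_pos D (\<lambda>h b. \<sigma> (w @ map fst h) b) (c,c) h = Some (e,x) \<Longrightarrow>
     letter_pos D q0 \<sigma> (w @ map fst h) = Some e \<and> reach D c (map fst h) x"
proof (induction h arbitrary: e x rule: rev_induct)
  case Nil
  then have "Some (c,c) = Some (e,x)" by (simp only: g1_pos_Nil)
  then have "e = c" "x = c" by (metis option.inject prod.inject)+
  then show ?case using lp by (simp add: reach_Nil_iff)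
next
  case (snoc p h)
  obtain b t where p: "p = (b, t)" by (cases p) auto
  have gs: "g1_pos D (\<lambda>h b. \<sigma> (w @ map fst h) b) (c,c) (h @ [(b,t)]) = Some (e,x)"
    using snoc.prems p by simp
  then obtain e0 x0 where
    g0: "g1_pos D (\<lambda>h b. \<sigma> (w @ map fst h) b) (c,c) h = Some (e0,x0)"
    and ap1: "applicable D e0 b (\<sigma> (w @ map fst h) b)" and ap2: "applicable D x0 b t"
    and e: "e = target e0 (\<sigma> (w @ map fst h) b)" and x: "x = target x0 t"
    unfolding g1_pos_snoc by (auto split: option.splits if_splits)
  from snoc.IH[OF g0] have i1: "letter_pos D q0 \<sigma> (w @ map fst h) = Some e0"
    and i2: "reach D c (map fst h) x0" by auto
  have "letter_pos D q0 \<sigma> ((w @ map fst h) @ [b]) = Some e"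
    using i1 ap1 e by (simp only: letter_pos_snoc) simp
  moreover have "reach D c (map fst h @ [b]) x"
  proof -
    have "step D x0 b x" using step_intro[OF ap2] x by simp
    then show ?thesis using reach_snoc[of D c "map fst h" b x] i2 by blast
  qed
  ultimately have "letter_pos D q0 \<sigma> (w @ map fst (h @ [(b,t)])) = Some e \<and> reach D c (map fst (h @ [(b,t)])) x"
    by simp
  then show ?case unfolding p .
qed

lemma dir1:
  fixes D :: "('q,'a) trans set" and \<sigma> :: "'a list \<Rightarrow> 'a \<Rightarrow> ('q,'a) trans"
  assumes win: "letter_winning D q0 F \<sigma>"
    and lp: "letter_pos D q0 \<sigma> w = Some c" and lp2: "letter_pos D q0 \<sigma> (w @ [a]) = Some c'"
  shows "good D F c (\<sigma> w a)"
proof -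
  define \<tau> :: "('a \<times> ('q,'a) trans) list \<Rightarrow> 'a \<Rightarrow> ('q,'a) trans" where "\<tau> = (\<lambda>h b. \<sigma> (w @ map fst h) b)"
  have ap: "applicable D c a (\<sigma> w a)" using lp lp2
    by (auto simp: letter_pos_snoc split: if_splits)
  have rc: "reach D (q0, 0) w c" using letter_pos_reach[OF lp] .
  have gw: "g1_winning D F \<tau> (c, c)"
    unfolding g1_winning_def
  proof (intro allI impI)
    fix h b e x assume gp: "g1_pos D \<tau> (c, c) h = Some (e, x)"
    from g1_sim[OF lp gp[unfolded \<tau>_def]] have
      le: "letter_pos D q0 \<sigma> (w @ map fst h) = Some e" and rx: "reach D c (map fst h) x" by auto
    have r0: "reach D (q0,0) (w @ map fst h) x" using reach_append[of D "(q0,0)" w "map fst h" x] rc rx by blast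
    note W = win[unfolded letter_winning_def, rule_format, OF le, of b]
    show "if \<exists>e'. step D e b e'
         then applicable D e b (\<tau> h b) \<and>
              (\<forall>x'. step D x b x' \<longrightarrow> fst x' \<in> F \<longrightarrow> fst (target e (\<tau> h b)) \<in> F)
         else (\<forall>x'. step D x b x' \<longrightarrow> \<not> can_accept D F x')"
    proof (cases "\<exists>e'. step D e b e'")
      case True
      from W have a1: "applicable D e b (\<tau> h b)"
        and a2: "(w @ map fst h) @ [b] \<in> lang D q0 F \<longrightarrow> fst (target e (\<tau> h b)) \<in> F"
        unfolding if_P[OF True] \<tau>_def by blast+
      have "\<forall>x'. step D x b x' \<longrightarrow> fst x' \<in> F \<longrightarrow> fst (target e (\<tau> h b)) \<in> F"
      proof (intro allI impI)
        fix x' assume "step D x b x'" "fst x' \<in> F"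
        then have "(w @ map fst h) @ [b] \<in> lang D q0 F"
          using r0 reach_snoc[of D "(q0,0)" "w @ map fst h" b x'] unfolding lang_def by blast
        then show "fst (target e (\<tau> h b)) \<in> F" using a2 by blast
      qed
      then show ?thesis using a1 unfolding if_P[OF True] by blast
    next
      case False
      from W have nl: "\<not> (\<exists>v. ((w @ map fst h) @ [b]) @ v \<in> lang D q0 F)"
        unfolding if_not_P[OF False] .
      have "\<forall>x'. step D x b x' \<longrightarrow> \<not> can_accept D F x'"
      proof (intro allI impI notI)
        fix x' assume sx: "step D x b x'" and ca: "can_accept D F x'"
        then obtain v y where "reach D x' v y" "fst y \<in> F" unfolding can_accept_def by blast
        moreover have "reach D (q0, 0) ((w @ map fst h) @ [b]) x'" using reach_snoc[of D "(q0,0)" "w @ map fst h" b x'] sx r0 by blast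
        ultimately have "((w @ map fst h) @ [b]) @ v \<in> lang D q0 F"
          unfolding lang_def using reach_append by blast
        with nl show False by blast
      qed
      then show ?thesis unfolding if_not_P[OF False] .
    qed
  qed
  obtain p b d p' where tt: "\<sigma> w a = (p,b,d,p')" by (cases "\<sigma> w a") auto
  with ap have "b = a" by (simp add: applicable_def)
  have "\<tau> [] a = \<sigma> w a" unfolding \<tau>_def by simp
  then have "applicable D c a (p,b,d,p') \<and> (\<exists>\<tau>. g1_winning D F \<tau> (c,c) \<and> \<tau> [] b = (p,b,d,p'))"
    using gw ap tt \<open>b = a\<close> by metis
  then show ?thesis unfolding good_def tt using \<open>b = a\<close> by simp
qed

theorem lemma5:
  fixes Delta :: "('q::finite \<times> 'a::finite \<times> int \<times> 'q) set"
    and q0 :: 'q and F :: "'q set" and \<sigma> :: "'a list \<Rightarrow> 'a \<Rightarrow> ('q \<times> 'a \<times> int \<times> 'q)"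
  assumes "ocn Delta"
    and "history_deterministic Delta q0 F"
    and "letter_strategy Delta q0 \<sigma>"
  shows "letter_winning Delta q0 F \<sigma> \<longleftrightarrow>
    (\<forall>w a c c'. letter_pos Delta q0 \<sigma> w = Some c \<longrightarrow>
        letter_pos Delta q0 \<sigma> (w @ [a]) = Some c' \<longrightarrow> good Delta F c (\<sigma> w a))"
  using dir1[of Delta q0 F \<sigma>] dir2[OF assms(2) assms(3)] by blast

end
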